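(* The complement $\mathbb{R}^3\setminus(\mathcal{C}\cup Son\cup Son')$ has exactly twelve connected components (six in the half-space $Y>0$ and six in the half-space $Y<0$, the two collections being exchanged by the reflection $(z,\tau,Y)\mapsto(z,\tau,-Y)$).
   Context: Fix $b_1>1$ and $c>0$. In $\mathbb{R}^3$ with coordinates $(z,\tau,Y)$, let $\mathcal{C}=\{Y=0\}$, let the sonic surface $Son$ be the zero set of $c\,z[(b_1+1)z^2+3]\tau+[(b_1+1)z^2-1]\frac{Y}{2}+\frac{c[(b_1-1)z^2+1]}{z^2+1}$, and let the sonic$'$ surface $Son'$ be the zero set of $c\,z[(b_1+1)z^2+3]\tau-[(b_1+1)z^2-1]\frac{Y}{2}+\frac{c[(b_1-1)z^2+1]}{z^2+1}$. *)

theory Defs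
  imports "HOL-Analysis.Analysis"
begin

definition son_fun :: "real \<Rightarrow> real \<Rightarrow> real \<times> real \<times> real \<Rightarrow> real" where
  "son_fun b1 c p = (case p of (z, \<tau>, Y) \<Rightarrow>
     c * z * ((b1 + 1) * z^2 + 3) * \<tau> + ((b1 + 1) * z^2 - 1) * (Y / 2)
     + c * ((b1 - 1) * z^2 + 1) / (z^2 + 1))"

definition son'_fun :: "real \<Rightarrow> real \<Rightarrow> real \<times> real \<times> real \<Rightarrow> real" where
  "son'_fun b1 c p = (case p of (z, \<tau>, Y) \<Rightarrow>
     c * z * ((b1 + 1) * z^2 + 3) * \<tau> - ((b1 + 1) * z^2 - 1) * (Y / 2)
     + c * ((b1 - 1) * z^2 + 1) / (z^2 + 1))"

definition C_plane :: "(real \<times> real \<times> real) set" where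
  "C_plane = {p. snd (snd p) = 0}"

definition Son :: "real \<Rightarrow> real \<Rightarrow> (real \<times> real \<times> real) set" where
  "Son b1 c = {p. son_fun b1 c p = 0}"

definition Son' :: "real \<Rightarrow> real \<Rightarrow> (real \<times> real \<times> real) set" where
  "Son' b1 c = {p. son'_fun b1 c p = 0}"

definition reflY :: "real \<times> real \<times> real \<Rightarrow> real \<times> real \<times> real" where
  "reflY p = (case p of (z, \<tau>, Y) \<Rightarrow> (z, \<tau>, - Y))"

end

theory Submission
  imports Defs "HOL-Analysis.Analysis"
begin


definition "Pf b1 c (z::real) = c*z*((b1+1)*z^2+3)"
definition "af b1 z = (b1+1)*z^2-(1::real)"
definition "Qf b1 c z = c*((b1-1)*z^2+1)/(z^2+(1::real))"
definition "uf b1 c p = Pf b1 c (fst p) * fst (snd p) + Qf b1 c (fst p)"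

lemma son_eq: "son_fun b1 c p = uf b1 c p + af b1 (fst p) * (snd (snd p) / 2)"
  by (cases p) (simp add: son_fun_def uf_def Pf_def af_def Qf_def)
lemma son'_eq: "son'_fun b1 c p = uf b1 c p - af b1 (fst p) * (snd (snd p) / 2)"
  by (cases p) (simp add: son'_fun_def uf_def Pf_def af_def Qf_def)

lemma den_nz: "(z::real)^2 + 1 \<noteq> 0"
  by (smt (verit) zero_le_power2)

lemma cont_Qf: "continuous_on A (Qf b1 c)"
  unfolding Qf_def by (intro continuous_intros) (simp add: den_nz)
lemma cont_Pf: "continuous_on A (Pf b1 c)"
  unfolding Pf_def by (intro continuous_intros)
lemma cont_af: "continuous_on A (af b1)"
  unfolding af_def by (intro continuous_intros)
lemma cont_uf: "continuous_on A (uf b1 c)"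
  unfolding uf_def by (intro continuous_intros continuous_on_compose2[OF cont_Qf] continuous_on_compose2[OF cont_Pf]) auto
lemma cont_son: "continuous_on A (son_fun b1 c)"
  unfolding son_eq[abs_def] by (intro continuous_intros cont_uf continuous_on_compose2[OF cont_af]) auto
lemma cont_son': "continuous_on A (son'_fun b1 c)"
  unfolding son'_eq[abs_def] by (intro continuous_intros cont_uf continuous_on_compose2[OF cont_af]) auto

lemma reflY_alt: "reflY p = (fst p, fst (snd p), - snd (snd p))"
  by (cases p) (simp add: reflY_def)
lemma cont_reflY: "continuous_on A reflY"
  unfolding reflY_alt[abs_def] by (intro continuous_intros)
lemma reflY_reflY[simp]: "reflY (reflY p) = p" by (simp add: reflY_alt)
lemma son_reflY[simp]: "son_fun b1 c (reflY p) = son'_fun b1 c p"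
  by (cases p) (simp add: reflY_def son_fun_def son'_fun_def)
lemma son'_reflY[simp]: "son'_fun b1 c (reflY p) = son_fun b1 c p"
  by (cases p) (simp add: reflY_def son_fun_def son'_fun_def)
lemma reflY_snd[simp]: "snd (snd (reflY p)) = - snd (snd p)" "fst (reflY p) = fst p"
  "fst (snd (reflY p)) = fst (snd p)"
  by (simp_all add: reflY_alt)

lemma absY: "(Y::real) > 0 \<Longrightarrow> \<bar>a\<bar>*(Y/2) = \<bar>a*(Y/2)\<bar>"
  by (simp add: abs_mult)
lemma L1: "((Y::real)>0 \<and> u + a*(Y/2) < 0 \<and> u - a*(Y/2) < 0) \<longleftrightarrow> (Y>0 \<and> -u > \<bar>a\<bar>*(Y/2))"
  using absY[of Y a] by (cases "Y > 0") auto
lemma L2: "((Y::real)>0 \<and> u + a*(Y/2) > 0 \<and> u - a*(Y/2) > 0) \<longleftrightarrow> (Y>0 \<and> u > \<bar>a\<bar>*(Y/2))"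
  using absY[of Y a] by (cases "Y > 0") auto
lemma L3: "((Y::real)>0 \<and> u + a*(Y/2) > 0 \<and> u - a*(Y/2) < 0) \<longleftrightarrow> (a > 0 \<and> Y > 2*\<bar>u\<bar>/\<bar>a\<bar>)"
proof
  assume h: "Y>0 \<and> u + a*(Y/2) > 0 \<and> u - a*(Y/2) < 0"
  then have "a*Y > 0" by linarith
  then have a: "a > 0" using h by (simp add: zero_less_mult_iff)
  have "2*\<bar>u\<bar> < a*Y" using h by linarith
  then show "a > 0 \<and> Y > 2*\<bar>u\<bar>/\<bar>a\<bar>" using a by (simp add: field_simps)
next
  assume h: "a > 0 \<and> Y > 2*\<bar>u\<bar>/\<bar>a\<bar>"
  then have a: "a > 0" and h2: "Y > 2*\<bar>u\<bar>/\<bar>a\<bar>" by auto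
  then have "2*\<bar>u\<bar>/a < Y" by (simp add: abs_of_pos)
  then have "2*\<bar>u\<bar> < a*Y" using a by (simp add: pos_divide_less_eq mult.commute)
  moreover have "2*\<bar>u\<bar>/\<bar>a\<bar> \<ge> 0" by simp
  ultimately show "Y>0 \<and> u + a*(Y/2) > 0 \<and> u - a*(Y/2) < 0" using h2 by linarith
qed
lemma L4: "((Y::real)>0 \<and> u + a*(Y/2) < 0 \<and> u - a*(Y/2) > 0) \<longleftrightarrow> (a < 0 \<and> Y > 2*\<bar>u\<bar>/\<bar>a\<bar>)"
  using L3[of Y u "-a"] by auto

context fixes b1 c :: real assumes b1: "b1 > 1" and c: "c > 0"
begin

lemma Qf_pos: "Qf b1 c z > 0"
  unfolding Qf_def using b1 c by (intro divide_pos_pos mult_pos_pos add_nonneg_pos) auto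
lemma Pf_pos: "Pf b1 c z > 0 \<longleftrightarrow> z > 0"
proof -
  have "(b1+1)*z^2+3 > 0" using b1 by (intro add_nonneg_pos) auto
  then show ?thesis unfolding Pf_def using c by (simp add: zero_less_mult_iff)
qed
lemma Pf_neg: "Pf b1 c z < 0 \<longleftrightarrow> z < 0"
proof -
  have "(b1+1)*z^2+3 > 0" using b1 by (intro add_nonneg_pos) auto
  then show ?thesis unfolding Pf_def using c by (simp add: mult_less_0_iff)
qed
lemma at0: "Pf b1 c 0 = 0" "af b1 0 = -1" "Qf b1 c 0 = c"
  by (simp_all add: Pf_def af_def Qf_def)

definition "z0 = sqrt (1/(b1+1))"
lemma z0_pos: "z0 > 0" unfolding z0_def using b1 by simp
lemma af_pos: "af b1 z > 0 \<longleftrightarrow> \<bar>z\<bar> > z0"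
proof -
  have "af b1 z > 0 \<longleftrightarrow> z^2 > 1/(b1+1)" unfolding af_def using b1
    by (simp add: field_simps)
  also have "\<dots> \<longleftrightarrow> sqrt (z^2) > sqrt (1/(b1+1))" by (simp only: real_sqrt_less_iff)
  finally show ?thesis by (simp add: z0_def)
qed
lemma af_neg: "af b1 z < 0 \<longleftrightarrow> \<bar>z\<bar> < z0"
proof -
  have "af b1 z < 0 \<longleftrightarrow> z^2 < 1/(b1+1)" unfolding af_def using b1
    by (simp add: field_simps)
  also have "\<dots> \<longleftrightarrow> sqrt (z^2) < sqrt (1/(b1+1))" by (simp only: real_sqrt_less_iff)
  finally show ?thesis by (simp add: z0_def)
qed

end


definition "SS b1 c = UNIV - (C_plane \<union> Son b1 c \<union> Son' b1 c)"
lemma SS_iff: "p \<in> SS b1 c \<longleftrightarrow> snd (snd p) \<noteq> 0 \<and> son_fun b1 c p \<noteq> 0 \<and> son'_fun b1 c p \<noteq> 0"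
  by (auto simp: SS_def C_plane_def Son_def Son'_def)

definition base :: "real \<Rightarrow> real \<Rightarrow> real\<times>real\<times>real \<Rightarrow> nat" where
"base b1 c p = (if son_fun b1 c p > 0 \<and> son'_fun b1 c p > 0 then 0
   else if son_fun b1 c p < 0 \<and> son'_fun b1 c p < 0 then (if fst p > 0 then 1 else 2)
   else if son_fun b1 c p > 0 \<and> son'_fun b1 c p < 0 then (if fst p > 0 then 3 else 4) else 5)"
definition "cls b1 c p = (if snd (snd p) > 0 then base b1 c p else 6 + base b1 c (reflY p))"
definition "Rg b1 c i = {p \<in> SS b1 c. cls b1 c p = i}"

lemma base_le: "base b1 c p \<le> 5" by (simp add: base_def)
lemma cls_lt: "cls b1 c p < 12" using base_le[of b1 c p] base_le[of b1 c "reflY p"] by (simp add: cls_def)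

lemma SS_reflY: "reflY p \<in> SS b1 c \<longleftrightarrow> p \<in> SS b1 c" by (auto simp: SS_iff)

lemma Rg_refl: assumes "i < 6" shows "Rg b1 c (i+6) = reflY ` Rg b1 c i"
proof -
  have "p \<in> Rg b1 c (i+6) \<longleftrightarrow> reflY p \<in> Rg b1 c i" for p
    using assms base_le[of b1 c p] base_le[of b1 c "reflY p"] by (auto simp: Rg_def cls_def SS_iff)
  then have "Rg b1 c (i+6) = reflY -` Rg b1 c i" by auto
  also have "\<dots> = reflY ` Rg b1 c i"
    by (auto simp: image_iff) (metis reflY_reflY)
  finally show ?thesis .
qed

lemma Rg_disj: "i \<noteq> j \<Longrightarrow> Rg b1 c i \<inter> Rg b1 c j = {}" by (auto simp: Rg_def)
lemma Rg_Un: "SS b1 c = (\<Union>i<12. Rg b1 c i)" using cls_lt[of b1 c] by (auto simp: Rg_def)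

context fixes b1 c :: real assumes b1: "b1 > 1" and c: "c > 0"
begin

lemma at_z0: "fst p = 0 \<Longrightarrow> son_fun b1 c p = c - snd (snd p)/2 \<and> son'_fun b1 c p = c + snd (snd p)/2"
  by (cases p) (simp add: son_fun_def son'_fun_def)

lemma Rg0: "Rg b1 c 0 = {p. snd (snd p) > 0 \<and> son_fun b1 c p > 0 \<and> son'_fun b1 c p > 0}"
  by (auto simp: Rg_def cls_def SS_iff base_def)
lemma Rg1: "Rg b1 c 1 = {p. snd (snd p) > 0 \<and> son_fun b1 c p < 0 \<and> son'_fun b1 c p < 0 \<and> fst p > 0}"
  by (auto simp: Rg_def cls_def SS_iff base_def)
lemma Rg2: "Rg b1 c 2 = {p. snd (snd p) > 0 \<and> son_fun b1 c p < 0 \<and> son'_fun b1 c p < 0 \<and> fst p < 0}"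
proof -
  have "fst p \<noteq> 0" if "snd (snd p) > 0" "son'_fun b1 c p < 0" for p
    using at_z0[of p] that c by auto
  then show ?thesis by (force simp: Rg_def cls_def SS_iff base_def)
qed
lemma Rg3: "Rg b1 c 3 = {p. snd (snd p) > 0 \<and> son_fun b1 c p > 0 \<and> son'_fun b1 c p < 0 \<and> fst p > 0}"
  by (auto simp: Rg_def cls_def SS_iff base_def)
lemma Rg4: "Rg b1 c 4 = {p. snd (snd p) > 0 \<and> son_fun b1 c p > 0 \<and> son'_fun b1 c p < 0 \<and> fst p < 0}"
proof -
  have "fst p \<noteq> 0" if "snd (snd p) > 0" "son'_fun b1 c p < 0" for p
    using at_z0[of p] that c by auto
  then show ?thesis by (force simp: Rg_def cls_def SS_iff base_def)
qed
lemma Rg5: "Rg b1 c 5 = {p. snd (snd p) > 0 \<and> son_fun b1 c p < 0 \<and> son'_fun b1 c p > 0}"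
  by (auto simp: Rg_def cls_def SS_iff base_def)

lemma Rg_open: "i < 6 \<Longrightarrow> open (Rg b1 c i)"
proof -
  have cs: "continuous_on UNIV (son_fun b1 c)" "continuous_on UNIV (son'_fun b1 c)"
    "continuous_on UNIV (\<lambda>p::real\<times>real\<times>real. snd (snd p))" "continuous_on UNIV (\<lambda>p::real\<times>real\<times>real. fst p)"
    by (intro cont_son cont_son' continuous_intros)+
  assume "i < 6"
  then have "i = 0 \<or> i = 1 \<or> i = 2 \<or> i = 3 \<or> i = 4 \<or> i = 5" by auto
  then show ?thesis
    by (elim disjE) (simp_all only: Rg0 Rg1 Rg2 Rg3 Rg4 Rg5;
        intro open_Collect_conj open_Collect_less cs continuous_on_const)+
qed

end


lemma conn_img: "convex (D::(real*real*real) set) \<Longrightarrow> continuous_on D g \<Longrightarrow> D \<noteq> {} \<Longrightarrow> X = g ` D \<Longrightarrow> connected X \<and> X \<noteq> {}"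
  using convex_connected[of D] connected_continuous_image[of D g] by auto

context fixes b1 c :: real assumes b1: "b1 > 1" and c: "c > 0"
begin

lemma fib_tau:
  fixes Z :: "real set" and \<sigma> :: real
  assumes Zc: "convex Z" and Zne: "Z \<noteq> {}" and P: "\<forall>z\<in>Z. Pf b1 c z \<noteq> 0" and s: "\<sigma>*\<sigma> = 1"
  shows "connected {p. fst p \<in> Z \<and> snd (snd p) > 0 \<and> \<sigma> * uf b1 c p > \<bar>af b1 (fst p)\<bar> * (snd (snd p)/2)}
       \<and> {p. fst p \<in> Z \<and> snd (snd p) > 0 \<and> \<sigma> * uf b1 c p > \<bar>af b1 (fst p)\<bar> * (snd (snd p)/2)} \<noteq> {}"
    (is "connected ?X \<and> ?X \<noteq> {}")
proof (rule conn_img)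
  let ?D = "Z \<times> {0::real<..} \<times> {0::real<..}"
  define g where "g x = (fst x, (\<sigma>*(\<bar>af b1 (fst x)\<bar>*(fst (snd x)/2) + snd (snd x)) - Qf b1 c (fst x))/Pf b1 c (fst x), fst (snd x))"
    for x :: "real\<times>real\<times>real"
  show "convex ?D" using Zc by (intro convex_Times convex_real_interval)
  show "?D \<noteq> {}" using Zne by auto
  show "continuous_on ?D g" unfolding g_def
    by (intro continuous_intros continuous_on_compose2[OF cont_af] continuous_on_compose2[OF cont_Qf]
        continuous_on_compose2[OF cont_Pf]) (auto simp: P)
  show "?X = g ` ?D"
  proof
    show "?X \<subseteq> g ` ?D"
    proof
      fix p assume p: "p \<in> ?X"
      obtain z t Y where pe: "p = (z,t,Y)" by (cases p) auto
      have Pz: "Pf b1 c z \<noteq> 0" using p P pe by auto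
      define w where "w = \<sigma> * uf b1 c p - \<bar>af b1 z\<bar>*(Y/2)"
      have "(z, Y, w) \<in> ?D" using p pe w_def by auto
      moreover have "g (z,Y,w) = p"
      proof -
        have "\<sigma>*(\<bar>af b1 z\<bar>*(Y/2) + w) = \<sigma>*\<sigma>*uf b1 c p" by (simp add: w_def algebra_simps)
        also have "\<dots> = Pf b1 c z * t + Qf b1 c z" using s by (simp add: uf_def pe)
        finally show ?thesis using Pz by (simp add: g_def pe)
      qed
      ultimately show "p \<in> g ` ?D" by (metis image_eqI)
    qed
    show "g ` ?D \<subseteq> ?X"
    proof
      fix q assume "q \<in> g ` ?D"
      then obtain z Y w where x: "z \<in> Z" "Y > 0" "w > 0" and q: "q = g (z,Y,w)" by auto
      have Pz: "Pf b1 c z \<noteq> 0" using x P by auto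
      have "uf b1 c q = \<sigma>*(\<bar>af b1 z\<bar>*(Y/2) + w)" using Pz by (simp add: q g_def uf_def)
      then have "\<sigma> * uf b1 c q = \<bar>af b1 z\<bar>*(Y/2) + w" using s by (simp add: mult.assoc[symmetric])
      then show "q \<in> ?X" using x by (simp add: q g_def)
    qed
  qed
qed

lemma fib_Y:
  fixes Z :: "real set"
  assumes Zc: "convex Z" and Zne: "Z \<noteq> {}" and A: "\<forall>z\<in>Z. af b1 z \<noteq> 0"
  shows "connected {p. fst p \<in> Z \<and> snd (snd p) > 2*\<bar>uf b1 c p\<bar>/\<bar>af b1 (fst p)\<bar>}
       \<and> {p. fst p \<in> Z \<and> snd (snd p) > 2*\<bar>uf b1 c p\<bar>/\<bar>af b1 (fst p)\<bar>} \<noteq> {}"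
    (is "connected ?X \<and> ?X \<noteq> {}")
proof (rule conn_img)
  let ?D = "Z \<times> (UNIV::real set) \<times> {0::real<..}"
  define g where "g x = (fst x, fst (snd x), 2*\<bar>uf b1 c x\<bar>/\<bar>af b1 (fst x)\<bar> + snd (snd x))"
    for x :: "real\<times>real\<times>real"
  have ug: "uf b1 c (g x) = uf b1 c x" for x by (simp add: g_def uf_def)
  show "convex ?D" using Zc by (intro convex_Times convex_real_interval convex_UNIV)
  show "?D \<noteq> {}" using Zne by auto
  show "continuous_on ?D g" unfolding g_def
    by (intro continuous_intros continuous_on_compose2[OF cont_af] cont_uf) (auto simp: A)
  show "?X = g ` ?D"
  proof
    show "?X \<subseteq> g ` ?D"
    proof
      fix p assume p: "p \<in> ?X"
      obtain z t Y where pe: "p = (z,t,Y)" by (cases p) auto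
      define w where "w = Y - 2*\<bar>uf b1 c p\<bar>/\<bar>af b1 z\<bar>"
      have "(z, t, w) \<in> ?D" using p pe w_def by auto
      moreover have "uf b1 c (z,t,w) = uf b1 c p" by (simp add: uf_def pe)
      then have "g (z,t,w) = p" by (simp add: g_def pe w_def)
      ultimately show "p \<in> g ` ?D" by (metis image_eqI)
    qed
    show "g ` ?D \<subseteq> ?X"
    proof
      fix q assume "q \<in> g ` ?D"
      then obtain x where x: "x \<in> ?D" and q: "q = g x" by auto
      show "q \<in> ?X" using x ug[of x] by (auto simp: q g_def)
    qed
  qed
qed

end


lemma prop4: "(A \<and> B \<and> C) = (A \<and> D) \<Longrightarrow> (A \<and> B \<and> C \<and> E) = (E \<and> A \<and> D)" by blast

context fixes b1 c :: real assumes b1: "b1 > 1" and c: "c > 0"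
begin

lemma Rg1_conn: "connected (Rg b1 c 1) \<and> Rg b1 c 1 \<noteq> {}"
proof -
  let ?R = "{p. fst p \<in> {0<..} \<and> snd (snd p) > 0 \<and> (-1) * uf b1 c p > \<bar>af b1 (fst p)\<bar> * (snd (snd p)/2)}"
  have "p \<in> Rg b1 c 1 \<longleftrightarrow> p \<in> ?R" for p
    using L1[of "snd (snd p)" "uf b1 c p" "af b1 (fst p)"] unfolding Rg1[OF b1 c] son_eq son'_eq mem_Collect_eq greaterThan_iff lessThan_iff mult_minus1 by (rule prop4)
  then have eq: "Rg b1 c 1 = ?R" by (rule set_eqI)
  have "connected ?R \<and> ?R \<noteq> {}"
  proof (rule fib_tau[OF b1 c])
    show "convex ({0<..}::real set)" by simp
    show "({0<..}::real set) \<noteq> {}" by auto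
    show "\<forall>z\<in>{0<..}. Pf b1 c z \<noteq> 0"
    proof
      fix z :: real assume "z \<in> {0<..}"
      then show "Pf b1 c z \<noteq> 0" using Pf_pos[OF b1 c, of z] by auto
    qed
    show "(-1::real) * -1 = 1" by simp
  qed
  then show ?thesis unfolding eq[symmetric] .
qed

lemma Rg2_conn: "connected (Rg b1 c 2) \<and> Rg b1 c 2 \<noteq> {}"
proof -
  let ?R = "{p. fst p \<in> {..<0} \<and> snd (snd p) > 0 \<and> (-1) * uf b1 c p > \<bar>af b1 (fst p)\<bar> * (snd (snd p)/2)}"
  have "p \<in> Rg b1 c 2 \<longleftrightarrow> p \<in> ?R" for p
    using L1[of "snd (snd p)" "uf b1 c p" "af b1 (fst p)"] unfolding Rg2[OF b1 c] son_eq son'_eq mem_Collect_eq greaterThan_iff lessThan_iff mult_minus1 by (rule prop4)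
  then have eq: "Rg b1 c 2 = ?R" by (rule set_eqI)
  have "connected ?R \<and> ?R \<noteq> {}"
  proof (rule fib_tau[OF b1 c])
    show "convex ({..<0}::real set)" by simp
    show "({..<0}::real set) \<noteq> {}" by auto
    show "\<forall>z\<in>{..<0}. Pf b1 c z \<noteq> 0"
    proof
      fix z :: real assume "z \<in> {..<0}"
      then show "Pf b1 c z \<noteq> 0" using Pf_neg[OF b1 c, of z] by auto
    qed
    show "(-1::real) * -1 = 1" by simp
  qed
  then show ?thesis unfolding eq[symmetric] .
qed

lemma Rg3_conn: "connected (Rg b1 c 3) \<and> Rg b1 c 3 \<noteq> {}"
proof -
  let ?R = "{p. fst p \<in> {z0 b1<..} \<and> snd (snd p) > 2*\<bar>uf b1 c p\<bar>/\<bar>af b1 (fst p)\<bar>}"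
  have "p \<in> Rg b1 c 3 \<longleftrightarrow> p \<in> ?R" for p
    using L3[of "snd (snd p)" "uf b1 c p" "af b1 (fst p)"] af_pos[OF b1 c, of "fst p"] z0_pos[OF b1 c]
    by (simp add: Rg3[OF b1 c] son_eq son'_eq) (auto simp: abs_if)
  then have eq: "Rg b1 c 3 = ?R" by (rule set_eqI)
  have "connected ?R \<and> ?R \<noteq> {}"
  proof (rule fib_Y[OF b1 c])
    show "convex ({z0 b1<..}::real set)" by simp
    show "({z0 b1<..}::real set) \<noteq> {}" by auto
    show "\<forall>z\<in>{z0 b1<..}. af b1 z \<noteq> 0"
    proof
      fix z :: real assume "z \<in> {z0 b1<..}"
      then show "af b1 z \<noteq> 0" using af_pos[OF b1 c, of z] z0_pos[OF b1 c] by (auto simp: abs_if split: if_splits)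
    qed
  qed
  then show ?thesis unfolding eq[symmetric] .
qed

lemma Rg4_conn: "connected (Rg b1 c 4) \<and> Rg b1 c 4 \<noteq> {}"
proof -
  let ?R = "{p. fst p \<in> {..< - z0 b1} \<and> snd (snd p) > 2*\<bar>uf b1 c p\<bar>/\<bar>af b1 (fst p)\<bar>}"
  have "p \<in> Rg b1 c 4 \<longleftrightarrow> p \<in> ?R" for p
    using L3[of "snd (snd p)" "uf b1 c p" "af b1 (fst p)"] af_pos[OF b1 c, of "fst p"] z0_pos[OF b1 c]
    by (simp add: Rg4[OF b1 c] son_eq son'_eq) (auto simp: abs_if)
  then have eq: "Rg b1 c 4 = ?R" by (rule set_eqI)
  have "connected ?R \<and> ?R \<noteq> {}"
  proof (rule fib_Y[OF b1 c])
    show "convex ({..< - z0 b1}::real set)" by simp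
    show "({..< - z0 b1}::real set) \<noteq> {}" by auto
    show "\<forall>z\<in>{..< - z0 b1}. af b1 z \<noteq> 0"
    proof
      fix z :: real assume "z \<in> {..< - z0 b1}"
      then show "af b1 z \<noteq> 0" using af_pos[OF b1 c, of z] z0_pos[OF b1 c] by (auto simp: abs_if split: if_splits)
    qed
  qed
  then show ?thesis unfolding eq[symmetric] .
qed

lemma Rg5_conn: "connected (Rg b1 c 5) \<and> Rg b1 c 5 \<noteq> {}"
proof -
  let ?R = "{p. fst p \<in> {- z0 b1<..<z0 b1} \<and> snd (snd p) > 2*\<bar>uf b1 c p\<bar>/\<bar>af b1 (fst p)\<bar>}"
  have "p \<in> Rg b1 c 5 \<longleftrightarrow> p \<in> ?R" for p
    using L4[of "snd (snd p)" "uf b1 c p" "af b1 (fst p)"] af_neg[OF b1 c, of "fst p"] z0_pos[OF b1 c]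
    by (simp add: Rg5[OF b1 c] son_eq son'_eq) (auto simp: abs_if)
  then have eq: "Rg b1 c 5 = ?R" by (rule set_eqI)
  have "connected ?R \<and> ?R \<noteq> {}"
  proof (rule fib_Y[OF b1 c])
    show "convex ({- z0 b1<..<z0 b1}::real set)" by simp
    show "({- z0 b1<..<z0 b1}::real set) \<noteq> {}" using z0_pos[OF b1 c] by auto
    show "\<forall>z\<in>{- z0 b1<..<z0 b1}. af b1 z \<noteq> 0"
    proof
      fix z :: real assume "z \<in> {- z0 b1<..<z0 b1}"
      then show "af b1 z \<noteq> 0" using af_neg[OF b1 c, of z] z0_pos[OF b1 c] by (auto simp: abs_if split: if_splits)
    qed
  qed
  then show ?thesis unfolding eq[symmetric] .
qed

end


context fixes b1 c :: real assumes b1: "b1 > 1" and c: "c > 0"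
begin

lemma Rg0_pt: "p \<in> Rg b1 c 0 \<longleftrightarrow> snd (snd p) > 0 \<and> 1 * uf b1 c p > \<bar>af b1 (fst p)\<bar> * (snd (snd p)/2)"
  using L2[of "snd (snd p)" "uf b1 c p" "af b1 (fst p)"] unfolding Rg0[OF b1 c] son_eq son'_eq mem_Collect_eq mult_1
  by (rule trans) (rule refl)

lemma half_conn:
  assumes Zc: "Z = {0::real<..} \<or> Z = {..<0}" and dd: "\<And>d::real. d > 0 \<Longrightarrow> (\<epsilon> * d) \<in> Z" and eps: "\<bar>\<epsilon>\<bar> = 1"
  shows "connected ({p. fst p \<in> Z \<and> snd (snd p) > 0 \<and> 1 * uf b1 c p > \<bar>af b1 (fst p)\<bar> * (snd (snd p)/2)}
           \<union> (Rg b1 c 0 \<inter> {p. fst p = 0}))"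
proof -
  let ?A = "{p. fst p \<in> Z \<and> snd (snd p) > 0 \<and> 1 * uf b1 c p > \<bar>af b1 (fst p)\<bar> * (snd (snd p)/2)}"
  let ?Z0 = "Rg b1 c 0 \<inter> {p. fst p = 0}"
  have cA: "connected ?A \<and> ?A \<noteq> {}"
  proof (rule fib_tau[OF b1 c])
    show "convex Z" using Zc by auto
    show "Z \<noteq> {}" using dd[of 1] by auto
    show "\<forall>z\<in>Z. Pf b1 c z \<noteq> 0"
    proof
      fix z :: real assume "z \<in> Z"
      then show "Pf b1 c z \<noteq> 0" using Zc Pf_pos[OF b1 c, of z] Pf_neg[OF b1 c, of z] by auto
    qed
    show "(1::real) * 1 = 1" by simp
  qed
  have op: "open (Rg b1 c 0)" using Rg_open[OF b1 c, of 0] by simp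
  have "?Z0 \<subseteq> closure ?A"
  proof
    fix x assume x: "x \<in> ?Z0"
    then obtain r where r: "r > 0" "ball x r \<subseteq> Rg b1 c 0" using op open_contains_ball by blast
    show "x \<in> closure ?A" unfolding closure_approachable
    proof (intro allI impI)
      fix e :: real assume e: "e > 0"
      define d where "d = min e r / 2"
      have d: "d > 0" "d < e" "d < r" using e r by (auto simp: d_def)
      define y where "y = (fst x + \<epsilon> * d, snd x)"
      obtain x1 x2 where xe: "x = (x1, x2)" by (cases x)
      have dy: "dist y x = d" using d eps
        by (simp add: xe y_def dist_Pair_Pair dist_real_def abs_mult)
      then have "y \<in> ball x r" using d by (simp add: dist_commute)
      then have "y \<in> Rg b1 c 0" using r by auto
      moreover have "fst y \<in> Z" using x dd[OF d(1)] by (simp add: y_def)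
      ultimately have yA: "y \<in> ?A" unfolding Rg0_pt by simp
      have "dist y x < e" using dy d by simp
      with yA show "\<exists>y\<in>?A. dist y x < e" by blast
    qed
  qed
  then show ?thesis
    by (intro connected_intermediate_closure[OF cA[THEN conjunct1]]) (auto intro: closure_subset[THEN subsetD])
qed

lemma Rg0_conn: "connected (Rg b1 c 0) \<and> Rg b1 c 0 \<noteq> {}"
proof -
  let ?A = "{p. fst p \<in> {0<..} \<and> snd (snd p) > 0 \<and> 1 * uf b1 c p > \<bar>af b1 (fst p)\<bar> * (snd (snd p)/2)}"
  let ?B = "{p. fst p \<in> {..<0} \<and> snd (snd p) > 0 \<and> 1 * uf b1 c p > \<bar>af b1 (fst p)\<bar> * (snd (snd p)/2)}"
  let ?Z0 = "Rg b1 c 0 \<inter> {p. fst p = 0}"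
  have "(0,0,c) \<in> Rg b1 c 0" using c at_z0[OF b1 c, of "(0,0,c)"] by (simp add: Rg0[OF b1 c])
  then have ne: "?Z0 \<noteq> {}" by auto
  have cA: "connected (?A \<union> ?Z0)" by (rule half_conn[where \<epsilon>=1]) auto
  have cB: "connected (?B \<union> ?Z0)" by (rule half_conn[where \<epsilon>="-1"]) auto
  have "Rg b1 c 0 = (?A \<union> ?Z0) \<union> (?B \<union> ?Z0)"
  proof (rule set_eqI)
    fix p
    show "p \<in> Rg b1 c 0 \<longleftrightarrow> p \<in> (?A \<union> ?Z0) \<union> (?B \<union> ?Z0)"
      using Rg0_pt[of p] by (cases "fst p" "0::real" rule: linorder_cases) auto
  qed
  moreover have "connected ((?A \<union> ?Z0) \<union> (?B \<union> ?Z0))" 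
  proof (rule connected_Un[OF cA cB])
    show "(?A \<union> ?Z0) \<inter> (?B \<union> ?Z0) \<noteq> {}" using ne by blast
  qed
  ultimately show ?thesis using ne by auto
qed

end


lemma comps_part:
  fixes R :: "nat \<Rightarrow> 'a::topological_space set"
  assumes SU: "S = (\<Union>i\<in>I. R i)"
    and P: "\<And>i. i \<in> I \<Longrightarrow> open (R i) \<and> connected (R i) \<and> R i \<noteq> {}"
    and D: "\<And>i j. i \<in> I \<Longrightarrow> j \<in> I \<Longrightarrow> i \<noteq> j \<Longrightarrow> R i \<inter> R j = {}"
  shows "components S = R ` I"
proof -
  have cc: "connected_component_set S p = R i" if i: "i \<in> I" and p: "p \<in> R i" for i p
  proof -
    have sub: "R i \<subseteq> connected_component_set S p"
      using P[OF i] p SU i by (intro connected_component_maximal) auto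
    let ?C = "connected_component_set S p"
    let ?V = "\<Union>j\<in>I-{i}. R j"
    have "open ?V" using P by auto
    moreover have "R i \<inter> ?V \<inter> ?C = {}" using D i by blast
    moreover have "?C \<subseteq> R i \<union> ?V" using connected_component_subset[of S p] SU by auto
    moreover have "R i \<inter> ?C \<noteq> {}" using p sub by auto
    ultimately have "?V \<inter> ?C = {}"
      using connectedD[OF connected_connected_component[of S p] conjunct1[OF P[OF i]]] by blast
    then have "?C \<subseteq> R i" using \<open>?C \<subseteq> R i \<union> ?V\<close> by blast
    then show ?thesis using sub by blast
  qed
  show ?thesis
  proof
    show "components S \<subseteq> R ` I"
    proof
      fix K assume "K \<in> components S"
      then obtain p where p: "p \<in> S" "K = connected_component_set S p" by (auto simp: components_iff)
      then obtain i where "i \<in> I" "p \<in> R i" using SU by auto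
      then show "K \<in> R ` I" using cc p by auto
    qed
    show "R ` I \<subseteq> components S"
    proof
      fix K assume "K \<in> R ` I"
      then obtain i where i: "i \<in> I" "K = R i" by auto
      then obtain p where p: "p \<in> R i" using P by blast
      then have "p \<in> S" using SU i by auto
      then show "K \<in> components S" using cc[OF i(1) p] i componentsI[of p S] by auto
    qed
  qed
qed

lemma reflY_img: "reflY ` A = reflY -` A"
  by (auto simp: image_iff) (metis reflY_reflY)

lemma Rg_pos: "p \<in> Rg b1 c i \<Longrightarrow> (i < 6 \<longleftrightarrow> snd (snd p) > 0)"
  using base_le[of b1 c p] base_le[of b1 c "reflY p"] by (auto simp: Rg_def cls_def split: if_splits)
lemma Rg_neg: "p \<in> Rg b1 c i \<Longrightarrow> (i \<ge> 6 \<longleftrightarrow> snd (snd p) < 0)"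
  using base_le[of b1 c p] base_le[of b1 c "reflY p"] by (auto simp: Rg_def cls_def SS_iff split: if_splits)

context fixes b1 c :: real assumes b1: "b1 > 1" and c: "c > 0"
begin

lemma Rg_low: "i < 6 \<Longrightarrow> open (Rg b1 c i) \<and> connected (Rg b1 c i) \<and> Rg b1 c i \<noteq> {}"
proof -
  assume i: "i < 6"
  then have "i = 0 \<or> i = 1 \<or> i = 2 \<or> i = 3 \<or> i = 4 \<or> i = 5" by auto
  then have "connected (Rg b1 c i) \<and> Rg b1 c i \<noteq> {}"
    using Rg0_conn[OF b1 c] Rg1_conn[OF b1 c] Rg2_conn[OF b1 c] Rg3_conn[OF b1 c] Rg4_conn[OF b1 c]
      Rg5_conn[OF b1 c] by (elim disjE) simp_all
  then show ?thesis using Rg_open[OF b1 c i] by simp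
qed

lemma Rg_all: "i < 12 \<Longrightarrow> open (Rg b1 c i) \<and> connected (Rg b1 c i) \<and> Rg b1 c i \<noteq> {}"
proof -
  assume i: "i < 12"
  show ?thesis
  proof (cases "i < 6")
    case True then show ?thesis by (rule Rg_low)
  next
    case False
    define j where "j = i - 6"
    have j: "j < 6" "i = j + 6" using i False unfolding j_def by arith+
    have h: "Rg b1 c i = reflY ` Rg b1 c j" using Rg_refl[OF j(1)] j by simp
    have lo: "open (Rg b1 c j) \<and> connected (Rg b1 c j) \<and> Rg b1 c j \<noteq> {}" by (rule Rg_low[OF j(1)])
    have cr: "continuous_on UNIV reflY" by (rule cont_reflY)
    have op: "open (reflY -` Rg b1 c j)"
      using lo cr by (intro continuous_open_vimage) (auto simp: continuous_on_eq_continuous_at)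
    have cn: "connected (reflY ` Rg b1 c j)"
      using lo by (intro connected_continuous_image continuous_on_subset[OF cr]) auto
    have "open (reflY ` Rg b1 c j)" using op by (subst reflY_img)
    moreover have "reflY ` Rg b1 c j \<noteq> {}" using lo by simp
    ultimately show ?thesis unfolding h using cn by blast
  qed
qed

end


lemma shift6: "(\<lambda>i. i + 6) ` {..<6::nat} = {6..<12}"
proof (rule set_eqI)
  fix x :: nat
  show "x \<in> (\<lambda>i. i + 6) ` {..<6} \<longleftrightarrow> x \<in> {6..<12}"
  proof
    assume "x \<in> {6..<12}"
    then have "x = (x - 6) + 6" "x - 6 \<in> {..<6}" by auto
    then show "x \<in> (\<lambda>i. i + 6) ` {..<6}" by (rule image_eqI)
  qed auto
qed

theorem proposition2:
  fixes b1 c :: real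
  assumes "b1 > 1" and "c > 0"
  defines "S \<equiv> UNIV - (C_plane \<union> Son b1 c \<union> Son' b1 c)"
  shows "finite (components S) \<and> card (components S) = 12
    \<and> card {K \<in> components S. K \<subseteq> {p. snd (snd p) > 0}} = 6
    \<and> card {K \<in> components S. K \<subseteq> {p. snd (snd p) < 0}} = 6
    \<and> (\<lambda>K. reflY ` K) ` {K \<in> components S. K \<subseteq> {p. snd (snd p) > 0}}
        = {K \<in> components S. K \<subseteq> {p. snd (snd p) < 0}}"
proof -
  have Seq: "S = SS b1 c" unfolding S_def SS_def ..
  have all: "\<And>i. i < 12 \<Longrightarrow> open (Rg b1 c i) \<and> connected (Rg b1 c i) \<and> Rg b1 c i \<noteq> {}"
    by (rule Rg_all[OF assms(1,2)])
  have comp: "components S = Rg b1 c ` {..<12}"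
    unfolding Seq
  proof (rule comps_part)
    show "SS b1 c = (\<Union>i\<in>{..<12}. Rg b1 c i)" by (rule Rg_Un)
    show "\<And>i. i \<in> {..<12} \<Longrightarrow> open (Rg b1 c i) \<and> connected (Rg b1 c i) \<and> Rg b1 c i \<noteq> {}"
      using all by simp
    show "\<And>i j. i \<in> {..<12} \<Longrightarrow> j \<in> {..<12} \<Longrightarrow> i \<noteq> j \<Longrightarrow> Rg b1 c i \<inter> Rg b1 c j = {}"
      by (rule Rg_disj)
  qed
  have inj: "inj_on (Rg b1 c) {..<12}"
  proof (rule inj_onI)
    fix i j assume ij: "i \<in> {..<12}" "j \<in> {..<12}" "Rg b1 c i = Rg b1 c j"
    show "i = j"
    proof (rule ccontr)
      assume "i \<noteq> j"
      then have "Rg b1 c i \<inter> Rg b1 c j = {}" by (rule Rg_disj)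
      then show False using ij all[of i] by auto
    qed
  qed
  have pos: "{K \<in> components S. K \<subseteq> {p. snd (snd p) > 0}} = Rg b1 c ` {..<6}"
  proof (rule set_eqI)
    fix K
    show "K \<in> {K \<in> components S. K \<subseteq> {p. snd (snd p) > 0}} \<longleftrightarrow> K \<in> Rg b1 c ` {..<6}"
    proof
      assume "K \<in> {K \<in> components S. K \<subseteq> {p. snd (snd p) > 0}}"
      then obtain i where i: "i < 12" "K = Rg b1 c i" "K \<subseteq> {p. snd (snd p) > 0}" unfolding comp by auto
      then obtain p where p: "p \<in> Rg b1 c i" using all[of i] by auto
      then have "snd (snd p) > 0" using i by auto
      then have "i < 6" using Rg_pos[OF p] by simp
      then show "K \<in> Rg b1 c ` {..<6}" using i by auto
    next
      assume "K \<in> Rg b1 c ` {..<6}"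
      then obtain i where i: "i < 6" "K = Rg b1 c i" by auto
      have "K \<subseteq> {p. snd (snd p) > 0}" using Rg_pos[of _ b1 c i] i by auto
      then show "K \<in> {K \<in> components S. K \<subseteq> {p. snd (snd p) > 0}}" unfolding comp using i by auto
    qed
  qed
  have neg: "{K \<in> components S. K \<subseteq> {p. snd (snd p) < 0}} = Rg b1 c ` {6..<12}"
  proof (rule set_eqI)
    fix K
    show "K \<in> {K \<in> components S. K \<subseteq> {p. snd (snd p) < 0}} \<longleftrightarrow> K \<in> Rg b1 c ` {6..<12}"
    proof
      assume "K \<in> {K \<in> components S. K \<subseteq> {p. snd (snd p) < 0}}"
      then obtain i where i: "i < 12" "K = Rg b1 c i" "K \<subseteq> {p. snd (snd p) < 0}" unfolding comp by auto
      then obtain p where p: "p \<in> Rg b1 c i" using all[of i] by auto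
      then have "snd (snd p) < 0" using i by auto
      then have "i \<ge> 6" using Rg_neg[OF p] by simp
      then show "K \<in> Rg b1 c ` {6..<12}" using i by auto
    next
      assume "K \<in> Rg b1 c ` {6..<12}"
      then obtain i where i: "6 \<le> i" "i < 12" "K = Rg b1 c i" by auto
      have "K \<subseteq> {p. snd (snd p) < 0}" using Rg_neg[of _ b1 c i] i by auto
      then show "K \<in> {K \<in> components S. K \<subseteq> {p. snd (snd p) < 0}}" unfolding comp using i by auto
    qed
  qed
  have c12: "card (components S) = 12" unfolding comp by (simp add: card_image[OF inj])
  have c6: "card (Rg b1 c ` {..<6}) = 6"
    by (subst card_image[OF inj_on_subset[OF inj]]) auto
  have c6': "card (Rg b1 c ` {6..<12}) = 6"
    by (subst card_image[OF inj_on_subset[OF inj]]) auto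
  have "(\<lambda>K. reflY ` K) ` Rg b1 c ` {..<6} = (\<lambda>i. Rg b1 c (i + 6)) ` {..<6}"
    unfolding image_image by (rule image_cong) (auto simp: Rg_refl)
  also have "\<dots> = Rg b1 c ` ((\<lambda>i. i + 6) ` {..<6})" by (simp add: image_image)
  also have "\<dots> = Rg b1 c ` {6..<12}" by (simp only: shift6)
  finally have rf: "(\<lambda>K. reflY ` K) ` Rg b1 c ` {..<6} = Rg b1 c ` {6..<12}" .
  show ?thesis unfolding pos neg using c12 c6 c6' rf by (simp add: comp)
qed


end
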